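(* Let $\mathbf f=(f_1,\dots,f_n)$ be a strongly generic $n$-tuple with $R[\mathbf f]=R$. Assume $\mathbf g=(g_1,\dots,g_n)\in\mathcal G_{00}^n$ is such that for all $(i,j)\in R$, $g_i\to f_j$ and $f_i\to g_j$ in $\Gamma_{\mathcal G}$. For $(x_1,\dots,x_n)\in(0,1]^n$ let $h_i=x_if_i+(1-x_i)g_i$. Then $\mathbf h=(h_1,\dots,h_n)$ is strongly generic and $R[\mathbf h]=R$.
   Context: $\mathcal G$ is the group of strictly increasing continuous maps $f:[-1,1]\to[-1,1]$ with $f(\pm1)=\pm1$; $\mathcal G_0=\{f\in\mathcal G:\int_{-1}^1f=0\}$; $\mathcal G_{00}$ the odd elements of $\mathcal G$. $f^e(t)=\tfrac12(f(t)+f(-t))$; $Q(f,g)=\int_{-1}^1f(g^{-1}(t))\,dt$. The digraph $\Gamma_{\mathcal G}$: $f\to g$ iff $Q(g,f)>0$. $R[\mathbf f]$ is the digraph on $[n]$ with $(i,j)\in R[\mathbf f]$ iff $Q(f_j,f_i)>0$. $\mathbf f\in\mathcal G_0^n$ is strongly generic if $\{f_1^e,\dots,f_n^e\}$ is linearly independent and $Q(f_i,f_j)\ne0$ for all $i\ne j$. *)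

theory Defs
  imports "HOL-Analysis.Analysis"
begin

text \<open>The group G: strictly increasing continuous self-maps of [-1,1] fixing the endpoints.
  Functions are real => real; only their values on [-1,1] matter.\<close>
definition inG :: "(real \<Rightarrow> real) \<Rightarrow> bool" where
  "inG f \<longleftrightarrow> continuous_on {-1..1} f \<and> strict_mono_on {-1..1} f
     \<and> f (-1) = -1 \<and> f 1 = 1"

definition inG0 :: "(real \<Rightarrow> real) \<Rightarrow> bool" where
  "inG0 f \<longleftrightarrow> inG f \<and> integral {-1..1} f = 0"

definition inG00 :: "(real \<Rightarrow> real) \<Rightarrow> bool" where
  "inG00 f \<longleftrightarrow> inG f \<and> (\<forall>t\<in>{-1..1}. f (-t) = - f t)"

definition even_part :: "(real \<Rightarrow> real) \<Rightarrow> real \<Rightarrow> real" where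
  "even_part f = (\<lambda>t. (f t + f (-t)) / 2)"

definition Q :: "(real \<Rightarrow> real) \<Rightarrow> (real \<Rightarrow> real) \<Rightarrow> real" where
  "Q f g = integral {-1..1} (\<lambda>t. f (inv_into {-1..1} g t))"

definition arrow :: "(real \<Rightarrow> real) \<Rightarrow> (real \<Rightarrow> real) \<Rightarrow> bool" where
  "arrow f g \<longleftrightarrow> Q g f > 0"

definition lin_indep_fam :: "nat \<Rightarrow> (nat \<Rightarrow> real \<Rightarrow> real) \<Rightarrow> bool" where
  "lin_indep_fam n F \<longleftrightarrow>
     (\<forall>c :: nat \<Rightarrow> real. (\<forall>t\<in>{-1..1}. (\<Sum>i=1..n. c i * F i t) = 0) \<longrightarrow> (\<forall>i\<in>{1..n}. c i = 0))"

definition strongly_generic :: "nat \<Rightarrow> (nat \<Rightarrow> real \<Rightarrow> real) \<Rightarrow> bool" where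
  "strongly_generic n f \<longleftrightarrow>
     (\<forall>i\<in>{1..n}. inG0 (f i)) \<and>
     lin_indep_fam n (\<lambda>i. even_part (f i)) \<and>
     (\<forall>i\<in>{1..n}. \<forall>j\<in>{1..n}. i \<noteq> j \<longrightarrow> Q (f i) (f j) \<noteq> 0)"

definition Rel :: "nat \<Rightarrow> (nat \<Rightarrow> real \<Rightarrow> real) \<Rightarrow> (nat \<times> nat) set" where
  "Rel n f = {(i, j). i \<in> {1..n} \<and> j \<in> {1..n} \<and> Q (f j) (f i) > 0}"

end

theory Submission imports Defs begin

lemma inG_le: "inG f \<Longrightarrow> x \<in> {-1..1} \<Longrightarrow> y \<in> {-1..1} \<Longrightarrow> x \<le> y \<Longrightarrow> f x \<le> f y"
  unfolding inG_def by (meson strict_mono_on_leD)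

lemma inG_less: "inG f \<Longrightarrow> x \<in> {-1..1} \<Longrightarrow> y \<in> {-1..1} \<Longrightarrow> x < y \<Longrightarrow> f x < f y"
  unfolding inG_def by (meson strict_mono_onD)

lemma inG_range: "inG f \<Longrightarrow> x \<in> {-1..1} \<Longrightarrow> f x \<in> {-1..1}"
proof -
  assume f: "inG f" and x: "x \<in> {-1..1}"
  have "f (-1) \<le> f x" "f x \<le> f 1" using inG_le[OF f] x by auto
  then show ?thesis using f unfolding inG_def by auto
qed

lemma inG_inj: "inG f \<Longrightarrow> inj_on f {-1..1}"
  unfolding inG_def by (meson strict_mono_on_imp_inj_on)

lemma inG_image: "inG f \<Longrightarrow> f ` {-1..1} = {-1..1}"
proof
  assume f: "inG f"
  show "f ` {-1..1} \<subseteq> {-1..1}" using inG_range[OF f] by auto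
  show "{-1..1} \<subseteq> f ` {-1..1}"
  proof
    fix y :: real assume y: "y \<in> {-1..1}"
    have "\<exists>x. -1 \<le> x \<and> x \<le> 1 \<and> f x = y"
      by (rule IVT') (use f y in \<open>auto simp: inG_def\<close>)
    then show "y \<in> f ` {-1..1}" by auto
  qed
qed

definition ginv :: "(real \<Rightarrow> real) \<Rightarrow> real \<Rightarrow> real" where
  "ginv f = inv_into {-1..1} f"

lemma ginv_range: "inG f \<Longrightarrow> y \<in> {-1..1} \<Longrightarrow> ginv f y \<in> {-1..1}"
  unfolding ginv_def by (metis inG_image inv_into_into)

lemma f_ginv: "inG f \<Longrightarrow> y \<in> {-1..1} \<Longrightarrow> f (ginv f y) = y"
  unfolding ginv_def by (metis inG_image f_inv_into_f)

lemma ginv_f: "inG f \<Longrightarrow> x \<in> {-1..1} \<Longrightarrow> ginv f (f x) = x"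
  unfolding ginv_def by (metis inG_inj inv_into_f_f)

lemma ginv_eq: "inG f \<Longrightarrow> x \<in> {-1..1} \<Longrightarrow> f x = y \<Longrightarrow> ginv f y = x"
  using ginv_f by blast

lemma ginv_cont: "inG f \<Longrightarrow> continuous_on {-1..1} (ginv f)"
proof -
  assume f: "inG f"
  have "continuous_on (f ` {-1..1}) (ginv f)"
    by (rule continuous_on_inv) (use f ginv_f in \<open>auto simp: inG_def\<close>)
  then show ?thesis using inG_image[OF f] by simp
qed

lemma ginv_inG: "inG f \<Longrightarrow> inG (ginv f)"
proof -
  assume f: "inG f"
  have "strict_mono_on {-1..1} (ginv f)"
  proof (rule strict_mono_onI)
    fix r s :: real assume rs: "r \<in> {-1..1}" "s \<in> {-1..1}" "r < s"
    show "ginv f r < ginv f s"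
    proof (rule ccontr)
      assume "\<not> ginv f r < ginv f s"
      then have "f (ginv f s) \<le> f (ginv f r)"
        using inG_le[OF f] ginv_range[OF f] rs by auto
      then show False using f_ginv[OF f] rs by auto
    qed
  qed
  moreover have "ginv f (-1) = -1" "ginv f 1 = 1"
    using ginv_eq[OF f] f unfolding inG_def by auto
  ultimately show ?thesis using ginv_cont[OF f] unfolding inG_def by auto
qed

lemma comp_inG: "inG f \<Longrightarrow> inG g \<Longrightarrow> inG (\<lambda>t. f (g t))"
proof -
  assume f: "inG f" and g: "inG g"
  have "continuous_on {-1..1} (\<lambda>t. f (g t))"
    using f g inG_range[OF g] unfolding inG_def
    by (metis continuous_on_compose2 image_subset_iff)
  moreover have "strict_mono_on {-1..1} (\<lambda>t. f (g t))"
    by (rule strict_mono_onI) (use inG_less[OF f] inG_less[OF g] inG_range[OF g] in auto)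
  ultimately show ?thesis using f g unfolding inG_def by auto
qed

lemma comb_inG: "inG f \<Longrightarrow> inG g \<Longrightarrow> 0 \<le> a \<Longrightarrow> a \<le> 1 \<Longrightarrow> inG (\<lambda>t. a * f t + (1 - a) * g t)"
proof -
  assume f: "inG f" and g: "inG g" and a: "0 \<le> a" "a \<le> 1"
  have "continuous_on {-1..1} (\<lambda>t. a * f t + (1 - a) * g t)"
    using f g unfolding inG_def by (intro continuous_intros) auto
  moreover have "strict_mono_on {-1..1} (\<lambda>t. a * f t + (1 - a) * g t)"
  proof (rule strict_mono_onI)
    fix r s :: real assume rs: "r \<in> {-1..1}" "s \<in> {-1..1}" "r < s"
    have 1: "f r < f s" "g r < g s" using inG_less[OF f] inG_less[OF g] rs by auto
    show "a * f r + (1 - a) * g r < a * f s + (1 - a) * g s"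
    proof (cases "a = 0")
      case True then show ?thesis using 1 by simp
    next
      case False
      then have "a * f r < a * f s" using a 1 by simp
      moreover have "(1 - a) * g r \<le> (1 - a) * g s" using a 1 by (simp add: mult_left_mono)
      ultimately show ?thesis by linarith
    qed
  qed
  ultimately show ?thesis using f g unfolding inG_def by (auto simp: algebra_simps)
qed

lemma nn_to_int:
  fixes h :: "real \<Rightarrow> real"
  assumes c: "continuous_on {-1..1} h" and nn: "\<And>t. t \<in> {-1..1} \<Longrightarrow> 0 \<le> h t"
  shows "(\<integral>\<^sup>+t. ennreal (indicator {-1..1} t * h t) \<partial>lborel) = ennreal (integral {-1..1} h)"
proof -
  have int: "(h has_integral integral {-1..1} h) {-1..1}"
    using integrable_continuous_real[OF c] by (rule integrable_integral)
  have "((\<lambda>t. indicator {-1..1} t *\<^sub>R h t) has_integral integral {-1..1} h) UNIV"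
  proof -
    have "((\<lambda>t. if t \<in> {-1..1} then h t else 0) has_integral integral {-1..1} h) UNIV"
      using int by (simp only: has_integral_restrict_UNIV)
    moreover have "(\<lambda>t. if t \<in> {-1..1} then h t else 0) = (\<lambda>t. indicator {-1..1} t *\<^sub>R h t)"
      by (auto simp: indicator_def)
    ultimately show ?thesis by simp
  qed
  moreover have "(\<lambda>t. indicator {-1..1} t *\<^sub>R h t) \<in> borel_measurable borel"
    by (rule borel_measurable_continuous_on_indicator) (use c in auto)
  moreover have "\<And>t. 0 \<le> indicator {-1..1} t *\<^sub>R h t"
    using nn by (simp add: indicator_def)
  ultimately show ?thesis
    using nn_integral_has_integral_lborel[of "\<lambda>t. indicator {-1..1} t *\<^sub>R h t"] by simp
qed

lemma area:
  assumes phi: "inG \<phi>"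
  shows "integral {-1..1} \<phi> + integral {-1..1} (ginv \<phi>) = 0"
proof -
  define \<Phi> where "\<Phi> t = \<phi> (max (-1) (min 1 t))" for t
  have "continuous_on UNIV \<Phi>"
  proof -
    have "continuous_on UNIV (\<lambda>t::real. max (-1) (min 1 t))" by (intro continuous_intros)
    moreover have "(\<lambda>t::real. max (-1) (min 1 t)) ` UNIV \<subseteq> {-1..1}" by auto
    ultimately show ?thesis unfolding \<Phi>_def using phi unfolding inG_def
      by (metis continuous_on_compose2)
  qed
  then have [measurable]: "\<Phi> \<in> borel_measurable borel"
    by (simp add: borel_measurable_continuous_onI)
  have nn1: "\<And>t. t \<in> {-1..1} \<Longrightarrow> 0 \<le> \<phi> t + 1" using inG_range[OF phi] by fastforce
  have \<Phi>eq: "t \<in> {-1..1} \<Longrightarrow> \<Phi> t = \<phi> t" for t unfolding \<Phi>_def by simp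
  define S :: "(real \<times> real) set" where "S = {-1..1} \<times> {-1..1}"
  define A where "A = {p \<in> S. snd p \<le> \<Phi> (fst p)}"
  define B where "B = {p \<in> S. \<Phi> (fst p) < snd p}"
  have Ssets: "S \<in> sets (lborel \<Otimes>\<^sub>M lborel)" unfolding S_def by simp
  have Asets: "A \<in> sets (lborel \<Otimes>\<^sub>M lborel)"
  proof -
    have "A = S \<inter> {p \<in> space (lborel \<Otimes>\<^sub>M lborel). snd p \<le> \<Phi> (fst p)}"
      unfolding A_def by (auto simp: space_pair_measure)
    also have "\<dots> \<in> sets (lborel \<Otimes>\<^sub>M lborel)" using Ssets by measurable
    finally show ?thesis .
  qed
  have Bsets: "B \<in> sets (lborel \<Otimes>\<^sub>M lborel)"
  proof -
    have "B = S \<inter> {p \<in> space (lborel \<Otimes>\<^sub>M lborel). \<Phi> (fst p) < snd p}"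
      unfolding B_def by (auto simp: space_pair_measure)
    also have "\<dots> \<in> sets (lborel \<Otimes>\<^sub>M lborel)" using Ssets by measurable
    finally show ?thesis .
  qed
  have "emeasure (lborel \<Otimes>\<^sub>M lborel) A + emeasure (lborel \<Otimes>\<^sub>M lborel) B
      = emeasure (lborel \<Otimes>\<^sub>M lborel) (A \<union> B)"
    by (rule plus_emeasure[OF Asets Bsets]) (auto simp: A_def B_def)
  also have "A \<union> B = S" unfolding A_def B_def by auto
  also have "emeasure (lborel \<Otimes>\<^sub>M lborel) S = ennreal 4"
    unfolding S_def by (simp add: lborel.emeasure_pair_measure_Times ennreal_mult[symmetric])
  finally have sum: "emeasure (lborel \<Otimes>\<^sub>M lborel) A + emeasure (lborel \<Otimes>\<^sub>M lborel) B = ennreal 4" .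
  have "emeasure (lborel \<Otimes>\<^sub>M lborel) A = (\<integral>\<^sup>+t. emeasure lborel (Pair t -` A) \<partial>lborel)"
    by (rule lborel.emeasure_pair_measure_alt[OF Asets])
  also have "\<dots> = (\<integral>\<^sup>+t. ennreal (indicator {-1..1} t * (\<phi> t + 1)) \<partial>lborel)"
  proof (rule nn_integral_cong)
    fix t :: real
    show "emeasure lborel (Pair t -` A) = ennreal (indicator {-1..1} t * (\<phi> t + 1))"
    proof (cases "t \<in> {-1..1}")
      case True
      then have r: "\<phi> t \<in> {-1..1}" using inG_range[OF phi] by auto
      have "Pair t -` A = {-1..\<phi> t}" using True r \<Phi>eq[OF True] unfolding A_def S_def by auto
      then show ?thesis using True r by simp
    next
      case False
      then have "Pair t -` A = {}" unfolding A_def S_def by auto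
      then show ?thesis using False by simp
    qed
  qed
  also have "\<dots> = ennreal (integral {-1..1} (\<lambda>t. \<phi> t + 1))"
    by (rule nn_to_int) (use phi nn1 in \<open>auto simp: inG_def intro!: continuous_intros\<close>)
  finally have eA: "emeasure (lborel \<Otimes>\<^sub>M lborel) A = ennreal (integral {-1..1} (\<lambda>t. \<phi> t + 1))" .
  have ipsi: "inG (ginv \<phi>)" using ginv_inG[OF phi] .
  have nn2: "\<And>t. t \<in> {-1..1} \<Longrightarrow> 0 \<le> ginv \<phi> t + 1" using inG_range[OF ipsi] by fastforce
  have "emeasure (lborel \<Otimes>\<^sub>M lborel) B = (\<integral>\<^sup>+y. emeasure lborel ((\<lambda>t. (t, y)) -` B) \<partial>lborel)"
    by (rule lborel_pair.emeasure_pair_measure_alt2[OF Bsets])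
  also have "\<dots> = (\<integral>\<^sup>+y. ennreal (indicator {-1..1} y * (ginv \<phi> y + 1)) \<partial>lborel)"
  proof (rule nn_integral_cong)
    fix y :: real
    show "emeasure lborel ((\<lambda>t. (t, y)) -` B) = ennreal (indicator {-1..1} y * (ginv \<phi> y + 1))"
    proof (cases "y \<in> {-1..1}")
      case True
      then have r: "ginv \<phi> y \<in> {-1..1}" using ginv_range[OF phi] by auto
      have "t \<in> {-1..1} \<Longrightarrow> \<phi> t < y \<longleftrightarrow> t < ginv \<phi> y" for t
        using inG_less[OF phi, of t "ginv \<phi> y"] inG_less[OF phi, of "ginv \<phi> y" t] r True
          f_ginv[OF phi True] by (metis linorder_neqE_linordered_idom order_less_asym)
      then have "(\<lambda>t. (t, y)) -` B = {-1..<ginv \<phi> y}" using True r \<Phi>eq unfolding B_def S_def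
        by auto
      then show ?thesis using True r by simp
    next
      case False
      then have "(\<lambda>t. (t, y)) -` B = {}" unfolding B_def S_def by auto
      then show ?thesis using False by simp
    qed
  qed
  also have "\<dots> = ennreal (integral {-1..1} (\<lambda>t. ginv \<phi> t + 1))"
    by (rule nn_to_int) (use ipsi nn2 in \<open>auto simp: inG_def intro!: continuous_intros\<close>)
  finally have eB: "emeasure (lborel \<Otimes>\<^sub>M lborel) B = ennreal (integral {-1..1} (\<lambda>t. ginv \<phi> t + 1))" .
  have i1: "integral {-1..1} (\<lambda>t. \<phi> t + 1) = integral {-1..1} \<phi> + 2"
    using phi unfolding inG_def
    by (subst integral_add) (auto intro!: integrable_continuous_real)
  have i2: "integral {-1..1} (\<lambda>t. ginv \<phi> t + 1) = integral {-1..1} (ginv \<phi>) + 2"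
    using ipsi unfolding inG_def
    by (subst integral_add) (auto intro!: integrable_continuous_real)
  have n1: "0 \<le> integral {-1..1} (\<lambda>t. \<phi> t + 1)"
    by (rule integral_nonneg) (use phi nn1 in \<open>auto simp: inG_def intro!: integrable_continuous_real continuous_intros\<close>)
  have n2: "0 \<le> integral {-1..1} (\<lambda>t. ginv \<phi> t + 1)"
    by (rule integral_nonneg) (use ipsi nn2 in \<open>auto simp: inG_def intro!: integrable_continuous_real continuous_intros\<close>)
  have "ennreal (integral {-1..1} (\<lambda>t. \<phi> t + 1) + integral {-1..1} (\<lambda>t. ginv \<phi> t + 1)) = ennreal 4"
    using sum eA eB n1 n2 by (simp add: ennreal_plus)
  then have "integral {-1..1} (\<lambda>t. \<phi> t + 1) + integral {-1..1} (\<lambda>t. ginv \<phi> t + 1) = 4"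
    using n1 n2 by (subst (asm) ennreal_inj) auto
  then show ?thesis using i1 i2 by simp
qed

lemma Q_ginv: "Q f g = integral {-1..1} (\<lambda>t. f (ginv g t))"
  by (simp add: Q_def ginv_def)

lemma inG_cont: "inG f \<Longrightarrow> continuous_on {-1..1} f"
  by (simp add: inG_def)

lemma cont_comp: "inG f \<Longrightarrow> inG g \<Longrightarrow> continuous_on {-1..1} (\<lambda>t. f (ginv g t))"
  using comp_inG ginv_inG inG_cont by blast

lemma odd_int:
  fixes F :: "real \<Rightarrow> real"
  assumes "\<forall>t\<in>{-1..1}. F (-t) = - F t"
  shows "integral {-1..1} F = 0"
proof -
  have "integral {-1..1} F = integral {- 1 .. 1} (\<lambda>t. F (-t))"
    using Henstock_Kurzweil_Integration.integral_reflect_real[of 1 "-1" F] by simp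
  also have "\<dots> = integral {-1..1} (\<lambda>t. - F t)"
    by (rule integral_cong) (use assms in auto)
  also have "\<dots> = - integral {-1..1} F" by (rule integral_neg)
  finally show ?thesis by simp
qed

lemma Q_self: "inG f \<Longrightarrow> Q f f = 0"
proof -
  assume f: "inG f"
  have "Q f f = integral {-1..1} (\<lambda>t. t)"
    unfolding Q_ginv by (rule integral_cong) (use f_ginv[OF f] in auto)
  also have "\<dots> = 0" by (rule odd_int) auto
  finally show ?thesis .
qed

lemma Q_anti: "inG u \<Longrightarrow> inG w \<Longrightarrow> Q u w = - Q w u"
proof -
  assume u: "inG u" and w: "inG w"
  define \<phi> where "\<phi> t = u (ginv w t)" for t
  have phi: "inG \<phi>" unfolding \<phi>_def by (rule comp_inG[OF u ginv_inG[OF w]])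
  have "ginv \<phi> t = w (ginv u t)" if t: "t \<in> {-1..1}" for t
  proof (rule ginv_eq[OF phi])
    show "w (ginv u t) \<in> {-1..1}" using inG_range[OF w] ginv_range[OF u t] by auto
    show "\<phi> (w (ginv u t)) = t" unfolding \<phi>_def
      using ginv_f[OF w ginv_range[OF u t]] f_ginv[OF u t] by simp
  qed
  then have "integral {-1..1} (ginv \<phi>) = Q w u"
    unfolding Q_ginv by (intro integral_cong) auto
  moreover have "integral {-1..1} \<phi> = Q u w"
    unfolding Q_ginv \<phi>_def by simp
  ultimately show ?thesis using area[OF phi] by simp
qed

lemma Q_lin1:
  assumes u: "inG u" and v: "inG v" and w: "inG w"
  shows "Q (\<lambda>t. a * u t + b * v t) w = a * Q u w + b * Q v w"
proof -
  have iu: "(\<lambda>t. u (ginv w t)) integrable_on {-1..1}"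
    using cont_comp[OF u w] by (rule integrable_continuous_real)
  have iv: "(\<lambda>t. v (ginv w t)) integrable_on {-1..1}"
    using cont_comp[OF v w] by (rule integrable_continuous_real)
  have ia: "(\<lambda>t. a * u (ginv w t)) integrable_on {-1..1}"
    using integrable_on_cmult_left[OF iu, of a] by simp
  have ib: "(\<lambda>t. b * v (ginv w t)) integrable_on {-1..1}"
    using integrable_on_cmult_left[OF iv, of b] by simp
  show ?thesis unfolding Q_ginv
    by (simp add: integral_add[OF ia ib])
qed

lemma Q_lin2:
  assumes u: "inG u" and p: "inG p" and q: "inG q" and a: "0 \<le> a" "a \<le> 1"
  shows "Q u (\<lambda>t. a * p t + (1 - a) * q t) = a * Q u p + (1 - a) * Q u q"
proof -
  have h: "inG (\<lambda>t. a * p t + (1 - a) * q t)" by (rule comb_inG[OF p q a])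
  have "Q u (\<lambda>t. a * p t + (1 - a) * q t) = - Q (\<lambda>t. a * p t + (1 - a) * q t) u"
    by (rule Q_anti[OF u h])
  also have "\<dots> = - (a * Q p u + (1 - a) * Q q u)" by (simp add: Q_lin1[OF p q u])
  also have "\<dots> = a * Q u p + (1 - a) * Q u q"
    using Q_anti[OF u p] Q_anti[OF u q] by simp
  finally show ?thesis .
qed

lemma inG00_inG: "inG00 g \<Longrightarrow> inG g" by (simp add: inG00_def)

lemma Q_odd:
  assumes g1: "inG00 g1" and g2: "inG00 g2"
  shows "Q g1 g2 = 0"
proof -
  have G1: "inG g1" and G2: "inG g2" using g1 g2 by (auto simp: inG00_def)
  have inv: "ginv g2 (-t) = - ginv g2 t" if t: "t \<in> {-1..1}" for t
  proof (rule ginv_eq[OF G2])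
    show "- ginv g2 t \<in> {-1..1}" using ginv_range[OF G2 t] by auto
    show "g2 (- ginv g2 t) = - t"
      using g2 ginv_range[OF G2 t] f_ginv[OF G2 t] unfolding inG00_def by auto
  qed
  show ?thesis unfolding Q_ginv
  proof (rule odd_int, intro ballI)
    fix t :: real assume t: "t \<in> {-1..1}"
    show "g1 (ginv g2 (- t)) = - g1 (ginv g2 t)"
      using inv[OF t] g1 ginv_range[OF G2 t] unfolding inG00_def by auto
  qed
qed

lemma int_odd: "inG00 g \<Longrightarrow> integral {-1..1} g = 0"
  by (rule odd_int) (auto simp: inG00_def)

theorem proposition4p17:
  fixes n :: nat and f g :: "nat \<Rightarrow> real \<Rightarrow> real" and x :: "nat \<Rightarrow> real"
    and R :: "(nat \<times> nat) set"
  assumes "strongly_generic n f"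
    and "Rel n f = R"
    and "\<forall>i\<in>{1..n}. inG00 (g i)"
    and "\<forall>(i, j)\<in>R. arrow (g i) (f j) \<and> arrow (f i) (g j)"
    and "\<forall>i\<in>{1..n}. 0 < x i \<and> x i \<le> 1"
  shows "strongly_generic n (\<lambda>i t. x i * f i t + (1 - x i) * g i t)
         \<and> Rel n (\<lambda>i t. x i * f i t + (1 - x i) * g i t) = R"
proof -
  note sg = assms(1) and RR = assms(2) and G00 = assms(3) and arr = assms(4) and X = assms(5)
  define h where "h i t = x i * f i t + (1 - x i) * g i t" for i t
  have hfun: "(\<lambda>i t. x i * f i t + (1 - x i) * g i t) = h" unfolding h_def by simp
  have F0: "inG0 (f i)" if "i \<in> {1..n}" for i using sg that unfolding strongly_generic_def by auto
  have F: "inG (f i)" if "i \<in> {1..n}" for i using F0[OF that] unfolding inG0_def by auto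
  have G: "inG (g i)" if "i \<in> {1..n}" for i using G00 that unfolding inG00_def by auto
  have x: "0 < x i" "x i \<le> 1" if "i \<in> {1..n}" for i using X that by auto
  have H: "inG (h i)" if i: "i \<in> {1..n}" for i
    unfolding h_def by (rule comb_inG[OF F[OF i] G[OF i]]) (use x[OF i] in auto)
  have Rchar: "(i, j) \<in> R \<longleftrightarrow> i \<in> {1..n} \<and> j \<in> {1..n} \<and> Q (f j) (f i) > 0" for i j
    using RR unfolding Rel_def by auto
  have expand: "Q (h j) (h i) = x j * (x i * Q (f j) (f i) + (1 - x i) * Q (f j) (g i))
        + (1 - x j) * (x i * Q (g j) (f i))"
    if i: "i \<in> {1..n}" and j: "j \<in> {1..n}" for i j
  proof -
    have "Q (h j) (h i) = x j * Q (f j) (h i) + (1 - x j) * Q (g j) (h i)"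
      unfolding h_def[of j, abs_def] by (rule Q_lin1[OF F[OF j] G[OF j] H[OF i]])
    moreover have "Q (f j) (h i) = x i * Q (f j) (f i) + (1 - x i) * Q (f j) (g i)"
      unfolding h_def[of i, abs_def] by (rule Q_lin2[OF F[OF j] F[OF i] G[OF i]]) (use x[OF i] in auto)
    moreover have "Q (g j) (h i) = x i * Q (g j) (f i) + (1 - x i) * Q (g j) (g i)"
      unfolding h_def[of i, abs_def] by (rule Q_lin2[OF G[OF j] F[OF i] G[OF i]]) (use x[OF i] in auto)
    moreover have "Q (g j) (g i) = 0" by (rule Q_odd) (use G00 i j in auto)
    ultimately show ?thesis by simp
  qed
  have pos: "Q (h j) (h i) > 0" if ij: "(i, j) \<in> R" for i j
  proof -
    have i: "i \<in> {1..n}" and j: "j \<in> {1..n}" and q: "Q (f j) (f i) > 0" using ij Rchar by auto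
    have a1: "Q (f j) (g i) > 0" and a2: "Q (g j) (f i) > 0"
      using arr ij unfolding arrow_def by auto
    have "x j * (x i * Q (f j) (f i)) > 0" using x[OF i] x[OF j] q by simp
    moreover have "x j * ((1 - x i) * Q (f j) (g i)) \<ge> 0"
      using x[OF i] x[OF j] a1 by simp
    moreover have "(1 - x j) * (x i * Q (g j) (f i)) \<ge> 0"
      using x[OF i] x[OF j] a2 by simp
    ultimately show ?thesis unfolding expand[OF i j] by (simp add: distrib_left)
  qed
  have fne: "Q (f i) (f j) \<noteq> 0" if "i \<in> {1..n}" "j \<in> {1..n}" "i \<noteq> j" for i j
    using sg that unfolding strongly_generic_def by auto
  have neg: "Q (h j) (h i) < 0" if i: "i \<in> {1..n}" and j: "j \<in> {1..n}" and ij: "i \<noteq> j"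
    and nR: "(i, j) \<notin> R" for i j
  proof -
    have "Q (f j) (f i) \<le> 0" using nR Rchar i j by auto
    moreover have "Q (f j) (f i) \<noteq> 0" using fne[OF j i] ij by auto
    ultimately have "Q (f i) (f j) > 0" using Q_anti[OF F[OF i] F[OF j]] by simp
    then have "(j, i) \<in> R" using Rchar i j by auto
    then have "Q (h i) (h j) > 0" by (rule pos)
    then show ?thesis using Q_anti[OF H[OF i] H[OF j]] by simp
  qed
  have relh: "Rel n h = R"
  proof (intro set_eqI iffI)
    fix p assume "p \<in> Rel n h"
    then obtain i j where p: "p = (i, j)" and i: "i \<in> {1..n}" and j: "j \<in> {1..n}"
      and q: "Q (h j) (h i) > 0" unfolding Rel_def by auto
    show "p \<in> R"
    proof (rule ccontr)
      assume nR: "p \<notin> R"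
      show False
      proof (cases "i = j")
        case True then show False using q Q_self[OF H[OF i]] by simp
      next
        case False then show False using neg[OF i j False] nR p q by simp
      qed
    qed
  next
    fix p assume pR: "p \<in> R"
    then obtain i j where p: "p = (i, j)" by (cases p) auto
    then show "p \<in> Rel n h" using pR pos[of i j] Rchar[of i j] unfolding Rel_def by auto
  qed
  have H0: "inG0 (h i)" if i: "i \<in> {1..n}" for i
  proof -
    have i1: "(\<lambda>t. x i * f i t) integrable_on {-1..1}"
      using integrable_on_cmult_left[OF integrable_continuous_real[OF inG_cont[OF F[OF i]]], of "x i"] by simp
    have i2: "(\<lambda>t. (1 - x i) * g i t) integrable_on {-1..1}"
      using integrable_on_cmult_left[OF integrable_continuous_real[OF inG_cont[OF G[OF i]]], of "1 - x i"] by simp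
    have "integral {-1..1} (h i) = x i * integral {-1..1} (f i) + (1 - x i) * integral {-1..1} (g i)"
      unfolding h_def by (simp add: integral_add[OF i1 i2])
    moreover have "integral {-1..1} (f i) = 0" using F0[OF i] unfolding inG0_def by auto
    moreover have "integral {-1..1} (g i) = 0" by (rule int_odd) (use G00 i in auto)
    ultimately show ?thesis using H[OF i] unfolding inG0_def by simp
  qed
  have ev: "even_part (h i) t = x i * even_part (f i) t" if i: "i \<in> {1..n}" and t: "t \<in> {-1..1}" for i t
  proof -
    have "g i (-t) = - g i t" using G00 i t unfolding inG00_def by auto
    then show ?thesis unfolding even_part_def h_def by (simp add: algebra_simps)
  qed
  have lf: "lin_indep_fam n (\<lambda>i. even_part (f i))" using sg unfolding strongly_generic_def by simp
  have li: "lin_indep_fam n (\<lambda>i. even_part (h i))"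
    unfolding lin_indep_fam_def
  proof (intro allI impI ballI)
    fix c :: "nat \<Rightarrow> real" and k
    assume c: "\<forall>t\<in>{-1..1}. (\<Sum>i=1..n. c i * even_part (h i) t) = 0" and k: "k \<in> {1..n}"
    have "\<forall>t\<in>{-1..1}. (\<Sum>i=1..n. (c i * x i) * even_part (f i) t) = 0"
    proof
      fix t :: real assume t: "t \<in> {-1..1}"
      have "(\<Sum>i=1..n. (c i * x i) * even_part (f i) t) = (\<Sum>i=1..n. c i * even_part (h i) t)"
        by (rule sum.cong) (use ev t in auto)
      then show "(\<Sum>i=1..n. (c i * x i) * even_part (f i) t) = 0" using c t by simp
    qed
    then have "c k * x k = 0"
      using lf[unfolded lin_indep_fam_def, rule_format, of "\<lambda>i. c i * x i", OF _ k] by simp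
    then show "c k = 0" using x[OF k] by simp
  qed
  have hne: "Q (h i) (h j) \<noteq> 0" if i: "i \<in> {1..n}" and j: "j \<in> {1..n}" and ij: "i \<noteq> j" for i j
  proof (cases "(j, i) \<in> R")
    case True then have "Q (h i) (h j) > 0" by (rule pos)
    then show ?thesis by simp
  next
    case False
    then have "Q (h i) (h j) < 0" using neg[OF j i] ij by auto
    then show ?thesis by simp
  qed
  have "strongly_generic n h"
    unfolding strongly_generic_def using H0 li hne by auto
  then show ?thesis using relh hfun by simp
qed

end
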